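(* Let $\rho:\mathfrak{k}\to\mathrm{End}(\mathbb{C}^s)$ be a generalized spin representation of $\mathfrak{k}$, i.e. a Lie algebra representation such that $\rho(X_i)^2=-\frac14\,\mathrm{id}_s$ for all $i=1,\dots,n$. Write $[A,B]=AB-BA$ and $\{A,B\}=AB+BA$. Then for all $1\le i\neq j\le n$: $[\rho(X_i),\rho(X_j)]=0$ if $a_{ij}=0$ (i.e. $i,j$ do not form an edge of the Dynkin diagram), and $\{\rho(X_i),\rho(X_j)\}=0$ if $a_{ij}=-1$ (i.e. $i,j$ form an edge of the Dynkin diagram).
   Context: Let $A=(a_{ij})_{1\le i,j\le n}$ be a symmetrizable generalized Cartan matrix that is simply laced (all off-diagonal entries are $0$ or $-1$); its Dynkin diagram has vertices $1,\dots,n$ and an edge between $i\neq j$ iff $a_{ij}=-1$. Let $\mathfrak{g}=\mathfrak{g}(A)$ be the split real Kac–Moody algebra with Chevalley generators $e_i,f_i$ and Cartan subalgebra $\mathfrak h$, and let $\omega$ be its Chevalley involution ($\omega(e_i)=-f_i$, $\omega(f_i)=-e_i$, $\omega(h)=-h$ for $h\in\mathfrak h$). The maximal compact subalgebra is $\mathfrak{k}=\mathrm{Fix}(\omega)$. The Berman generators are $X_i:=e_i-f_i\in\mathfrak k$; $\mathfrak{k}$ is isomorphic to the real Lie algebra generated by $X_1,\dots,X_n$ subject to the relations $[X_i,[X_i,X_j]]=-X_j$ if $a_{ij}=-1$ and $[X_i,X_j]=0$ if $a_{ij}=0$. *)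

theory Defs
  imports "HOL-Analysis.Analysis"
begin

type_synonym 's cmat = "complex ^ 's ^ 's"

definition commutator :: "'s::finite cmat \<Rightarrow> 's cmat \<Rightarrow> 's cmat" where
  "commutator P Q = P ** Q - Q ** P"

definition anticommutator :: "'s::finite cmat \<Rightarrow> 's cmat \<Rightarrow> 's cmat" where
  "anticommutator P Q = P ** Q + Q ** P"

definition gcm :: "nat \<Rightarrow> (nat \<Rightarrow> nat \<Rightarrow> int) \<Rightarrow> bool" where
  "gcm n a \<longleftrightarrow> (\<forall>i\<in>{1..n}. a i i = 2) \<and>
     (\<forall>i\<in>{1..n}. \<forall>j\<in>{1..n}. i \<noteq> j \<longrightarrow> a i j \<le> 0) \<and>
     (\<forall>i\<in>{1..n}. \<forall>j\<in>{1..n}. a i j = 0 \<longleftrightarrow> a j i = 0)"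

definition symmetrizable :: "nat \<Rightarrow> (nat \<Rightarrow> nat \<Rightarrow> int) \<Rightarrow> bool" where
  "symmetrizable n a \<longleftrightarrow> (\<exists>d :: nat \<Rightarrow> real. (\<forall>i\<in>{1..n}. d i > 0) \<and>
     (\<forall>i\<in>{1..n}. \<forall>j\<in>{1..n}. d i * of_int (a i j) = d j * of_int (a j i)))"

definition simply_laced :: "nat \<Rightarrow> (nat \<Rightarrow> nat \<Rightarrow> int) \<Rightarrow> bool" where
  "simply_laced n a \<longleftrightarrow> (\<forall>i\<in>{1..n}. \<forall>j\<in>{1..n}. i \<noteq> j \<longrightarrow> a i j = 0 \<or> a i j = -1)"

text \<open>A (real) Lie algebra representation rho of k = k(A) on C^s.  Since k is presented by the
 Berman generators X_1..X_n subject to the Berman relations, such a representation is the same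
 as the assignment R i = rho(X_i) of complex s x s matrices satisfying those relations.\<close>
definition k_rep :: "nat \<Rightarrow> (nat \<Rightarrow> nat \<Rightarrow> int) \<Rightarrow> (nat \<Rightarrow> 's::finite cmat) \<Rightarrow> bool" where
  "k_rep n a R \<longleftrightarrow>
     (\<forall>i\<in>{1..n}. \<forall>j\<in>{1..n}. i \<noteq> j \<longrightarrow> a i j = -1 \<longrightarrow>
        commutator (R i) (commutator (R i) (R j)) = - R j) \<and>
     (\<forall>i\<in>{1..n}. \<forall>j\<in>{1..n}. i \<noteq> j \<longrightarrow> a i j = 0 \<longrightarrow> commutator (R i) (R j) = 0)"

definition generalized_spin_rep :: "nat \<Rightarrow> (nat \<Rightarrow> nat \<Rightarrow> int) \<Rightarrow> (nat \<Rightarrow> 's::finite cmat) \<Rightarrow> bool" where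
  "generalized_spin_rep n a R \<longleftrightarrow> k_rep n a R \<and>
     (\<forall>i\<in>{1..n}. R i ** R i = mat (- 1 / 4))"

end

theory Submission
  imports Defs
begin

lemma mat_of_real_left:
  fixes B :: "complex ^ 's::finite ^ 's"
  shows "mat (complex_of_real r) ** B = r *\<^sub>R B"
  unfolding matrix_matrix_mult_def mat_def
  by (auto simp: vec_eq_iff if_distrib if_distribR sum.delta'[OF finite] scaleR_conv_of_real[where 'a=complex] cong: if_cong)

lemma mat_of_real_right:
  fixes B :: "complex ^ 's::finite ^ 's"
  shows "B ** mat (complex_of_real r) = r *\<^sub>R B"
  unfolding matrix_matrix_mult_def mat_def
  by (auto simp: vec_eq_iff if_distrib if_distribR sum.delta[OF finite] scaleR_conv_of_real[where 'a=complex] mult.commute cong: if_cong)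

lemma mm_diff_l: "(A::complex^'s::finite^'s) ** (B - C) = A ** B - A ** C"
  by (vector matrix_matrix_mult_def sum_subtractf[symmetric] field_simps)

lemma mm_diff_r: "((B::complex^'s::finite^'s) - C) ** A = B ** A - C ** A"
  by (vector matrix_matrix_mult_def sum_subtractf[symmetric] field_simps)

lemma mm_add_r: "((B::complex^'s::finite^'s) + C) ** A = B ** A + C ** A"
  by (vector matrix_matrix_mult_def sum.distrib[symmetric] field_simps)

lemma key:
  fixes A B :: "complex ^ 's::finite ^ 's"
  assumes h1: "A ** A = mat (- 1 / 4)"
    and h2: "commutator A (commutator A B) = - B"
  shows "anticommutator A B = 0"
proof -
  have M: "mat (- 1 / 4) = mat (complex_of_real (-1/4))" by simp
  have e: "(A ** A) ** B - (A ** B) ** A - (A ** B) ** A + B ** (A ** A) = - B"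
    using h2 unfolding commutator_def
    by (simp add: mm_diff_l mm_diff_r matrix_mul_assoc algebra_simps)
  hence "(-1/4) *\<^sub>R B - (A ** B) ** A - (A ** B) ** A + (-1/4) *\<^sub>R B = - B"
    unfolding h1 M mat_of_real_left mat_of_real_right .
  hence aba: "(A ** B) ** A = (1/4) *\<^sub>R B"
    by (simp add: algebra_simps scaleR_conv_of_real[where 'a=complex] vec_eq_iff) 
  have "A ** ((A ** B) ** A) = (-1/4) *\<^sub>R (B ** A)"
    unfolding matrix_mul_assoc h1 M mat_of_real_left
    by (simp add: scalar_matrix_assoc)
  moreover have "A ** ((A ** B) ** A) = (1/4) *\<^sub>R (A ** B)"
    by (simp add: aba matrix_scalar_ac scalar_matrix_assoc)
  ultimately have "(1/4) *\<^sub>R (A ** B) = (-1/4) *\<^sub>R (B ** A)" by simp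
  hence "A ** B = - (B ** A)"
    by (simp add: vec_eq_iff scaleR_conv_of_real[where 'a=complex])
  thus ?thesis unfolding anticommutator_def by simp
qed

theorem proposition2p3:
  fixes n :: nat and a :: "nat \<Rightarrow> nat \<Rightarrow> int" and R :: "nat \<Rightarrow> complex ^ 's::finite ^ 's"
  assumes "gcm n a" and "symmetrizable n a" and "simply_laced n a"
    and "generalized_spin_rep n a R"
  shows "\<forall>i\<in>{1..n}. \<forall>j\<in>{1..n}. i \<noteq> j \<longrightarrow>
           (a i j = 0 \<longrightarrow> commutator (R i) (R j) = 0) \<and>
           (a i j = -1 \<longrightarrow> anticommutator (R i) (R j) = 0)"
  using assms(4) unfolding generalized_spin_rep_def k_rep_def
  by (metis key)

end
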